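(* Let $\mathfrak{n}=\mathfrak{v}\oplus\mathfrak{z}$ be a 2-step nilpotent real Lie algebra of Heisenberg type with center $\mathfrak{z}$ of dimension $m$. Then there is a positive definite inner product on $\mathfrak{z}$ such that the image of $\mathfrak{g}(\mathfrak{n})$ in $\mathfrak{gl}(\mathfrak{z})$ is $\mathfrak{so}(\mathfrak{z})$; in particular $\mathfrak{g}(\mathfrak{n})/\mathfrak{g}_0(\mathfrak{n})\cong\mathfrak{so}(m)$.
   Context: $\mathfrak{n}=\mathfrak{v}\oplus\mathfrak{z}$ with bracket $[\ ,\ ]:\mathfrak{v}\times\mathfrak{v}\to\mathfrak{z}$, $\mathfrak{z}$ the center. $\mathfrak{n}$ is of Heisenberg type ($H$-type) if there are positive definite inner products on $\mathfrak{v}$ and $\mathfrak{z}$ such that the maps $T_z\in\operatorname{End}(\mathfrak{v})$ defined by $\langle T_zu,v\rangle_{\mathfrak{v}}=\langle z,[u,v]\rangle_{\mathfrak{z}}$ satisfy $T_z^2=-|z|^2 I$ for all $z\in\mathfrak{z}$. $G(\mathfrak{n})$ is the group of matrices $\begin{pmatrix} a&0\\0&b\end{pmatrix}$ with $a\in SL(\mathfrak{v})$, $b\in GL(\mathfrak{z})$, $b([u,v])=[au,av]$ for all $u,v$; $G_0(\mathfrak{n})$ is its subgroup with $b=I$. $\mathfrak{g}(\mathfrak{n}),\mathfrak{g}_0(\mathfrak{n})$ are their Lie algebras, and $\mathfrak{g}(\mathfrak{n})\to\mathfrak{gl}(\mathfrak{z})$ is the map $(a,b)\mapsto b$, with kernel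 $\mathfrak{g}_0(\mathfrak{n})$. *)

theory Defs
  imports "HOL-Analysis.Analysis"
begin

definition pos_def_ip :: "('a::real_vector \<Rightarrow> 'a \<Rightarrow> real) \<Rightarrow> bool" where
  "pos_def_ip ip \<longleftrightarrow> bilinear ip \<and> (\<forall>x y. ip x y = ip y x) \<and> (\<forall>x. x \<noteq> 0 \<longrightarrow> ip x x > 0)"

text \<open>2-step nilpotent Lie algebra n = v + z given by a skew bilinear bracket
  br : v x v -> z; z is the center (no nonzero element of v is central).\<close>
definition two_step_with_center ::
  "(real^'n \<Rightarrow> real^'n \<Rightarrow> real^'m) \<Rightarrow> bool" where
  "two_step_with_center br \<longleftrightarrow> bilinear br \<and> (\<forall>u w. br u w = - br w u)
     \<and> (\<forall>u. (\<forall>w. br u w = 0) \<longrightarrow> u = 0)"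

definition H_type :: "(real^'n \<Rightarrow> real^'n \<Rightarrow> real^'m) \<Rightarrow> bool" where
  "H_type br \<longleftrightarrow> (\<exists>ipv ipz. pos_def_ip ipv \<and> pos_def_ip ipz \<and>
     (\<forall>z. \<exists>T. linear T \<and> (\<forall>u w. ipv (T u) w = ipz z (br u w))
            \<and> (\<forall>u. T (T u) = - (ipz z z) *\<^sub>R u)))"

text \<open>The Lie algebra g(n): pairs (a,b), a in sl(v), b in gl(z), with
  b[u,w] = [au,w] + [u,aw] (Lie algebra of G(n)).\<close>
definition g_alg :: "(real^'n \<Rightarrow> real^'n \<Rightarrow> real^'m)
     \<Rightarrow> ((real^'n^'n) \<times> (real^'m \<Rightarrow> real^'m)) set" where
  "g_alg br = {p. trace (fst p) = 0 \<and> linear (snd p) \<and>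
     (\<forall>u w. snd p (br u w) = br (fst p *v u) w + br u (fst p *v w))}"

definition g_image :: "(real^'n \<Rightarrow> real^'n \<Rightarrow> real^'m) \<Rightarrow> (real^'m \<Rightarrow> real^'m) set" where
  "g_image br = snd ` g_alg br"

definition so_ip :: "('a::real_vector \<Rightarrow> 'a \<Rightarrow> real) \<Rightarrow> ('a \<Rightarrow> 'a) set" where
  "so_ip ip = {b. linear b \<and> (\<forall>x y. ip (b x) y = - ip x (b y))}"

end

theory Submission
  imports Defs
begin
lemma pd_sym: "pos_def_ip ip \<Longrightarrow> ip x y = ip y x" by (simp add: pos_def_ip_def)
lemma pd_bil: "pos_def_ip ip \<Longrightarrow> bilinear ip" by (simp add: pos_def_ip_def)

lemma pd_nondeg:
  assumes "pos_def_ip ip" "\<And>w. ip a w = ip b w" shows "a = b"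
proof (rule ccontr)
  assume "a \<noteq> b"
  hence "ip (a-b) (a-b) > 0" using assms(1) by (simp add: pos_def_ip_def)
  moreover have "ip (a-b) (a-b) = 0" using assms by (simp add: bilinear_lsub pd_bil)
  ultimately show False by simp
qed

lemma pd_nondeg2:
  assumes "pos_def_ip ip" "\<And>w. ip w a = ip w b" shows "a = b"
  using pd_nondeg[OF assms(1)] assms pd_sym[OF assms(1)] by metis

lemma ip_coord:
  fixes ip :: "real^'k \<Rightarrow> real^'k \<Rightarrow> real"
  assumes "pos_def_ip ip"
  shows "ip x w = (\<Sum>i\<in>UNIV. x$i * ip (axis i 1) w)"
proof -
  have "x = (\<Sum>i\<in>UNIV. (x$i) *\<^sub>R axis i 1)"
    using basis_expansion[of x] by (simp add: scalar_mult_eq_scaleR)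
  hence "ip x w = ip (\<Sum>i\<in>UNIV. (x$i) *\<^sub>R axis i 1) w" by simp
  also have "\<dots> = (\<Sum>i\<in>UNIV. ip ((x$i) *\<^sub>R axis i 1) w)"
    using linear_sum[of "\<lambda>x. ip x w"] pd_bil[OF assms] unfolding bilinear_def by blast
  also have "\<dots> = (\<Sum>i\<in>UNIV. x$i * ip (axis i 1) w)"
    using pd_bil[OF assms] by (simp add: bilinear_lmul)
  finally show ?thesis .
qed

lemma dual_basis:
  fixes ip :: "real^'k \<Rightarrow> real^'k \<Rightarrow> real"
  assumes "pos_def_ip ip"
  shows "\<exists>f. \<forall>i j. ip (axis i 1) (f j) = (if i = j then 1 else 0)"
proof -
  define F where "F w = (\<chi> i. ip (axis i 1) w)" for w
  have lin: "linear F"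
    by (rule linearI) (simp_all add: F_def vec_eq_iff bilinear_radd[OF pd_bil[OF assms]] bilinear_rmul[OF pd_bil[OF assms]])
  have "inj F"
  proof (rule injI)
    fix w w' assume "F w = F w'"
    hence e: "\<And>i. ip (axis i 1) w = ip (axis i 1) w'" by (simp add: F_def vec_eq_iff)
    show "w = w'"
    proof (rule pd_nondeg2[OF assms])
      fix x
      show "ip x w = ip x w'" using ip_coord[OF assms, of x w] ip_coord[OF assms, of x w'] e by simp
    qed
  qed
  hence "surj F" using linear_injective_imp_surjective[OF lin] by simp
  define f where "f j = inv F (axis j 1)" for j
  have fF: "\<And>j. F (f j) = axis j 1" using \<open>surj F\<close> by (simp add: f_def surj_f_inv_f)
  have "ip (axis i 1) (f j) = (if i = j then 1 else 0)" for i j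
    using arg_cong[OF fF[of j], of "\<lambda>v. v $ i"] by (simp add: F_def axis_def)
  hence "\<forall>i j. ip (axis i 1) (f j) = (if i = j then 1 else 0)" by blast
  thus ?thesis by blast
qed

definition Tr :: "(real^'k \<Rightarrow> real^'k) \<Rightarrow> real" where
  "Tr L = (\<Sum>i\<in>UNIV. L (axis i 1) $ i)"

lemma Tr_matrix: "trace (matrix L) = Tr L"
  by (simp add: trace_def matrix_def Tr_def)

lemma Tr_mat: "Tr (\<lambda>u. A *v u) = trace A"
  using Tr_matrix[of "\<lambda>u. A *v u"] by simp

lemma Tr_comm:
  fixes P Q :: "real^'k \<Rightarrow> real^'k"
  assumes "linear P" "linear Q"
  shows "Tr (\<lambda>u. P (Q u)) = Tr (\<lambda>u. Q (P u))"
proof -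
  have "Tr (\<lambda>u. P (Q u)) = trace (matrix (P o Q))" by (simp add: Tr_matrix o_def)
  also have "\<dots> = trace (matrix P ** matrix Q)" using matrix_compose[OF assms(2,1)] by simp
  also have "\<dots> = trace (matrix Q ** matrix P)" by (rule trace_mul_sym)
  also have "\<dots> = trace (matrix (Q o P))" using matrix_compose[OF assms] by simp
  finally show ?thesis by (simp add: Tr_matrix o_def)
qed

lemma Tr_add: "Tr (\<lambda>u. L u + M u) = Tr L + Tr M"
  by (simp add: Tr_def sum.distrib)
lemma Tr_diff: "Tr (\<lambda>u. L u - M u) = Tr L - Tr M"
  by (simp add: Tr_def sum_subtractf)
lemma Tr_scale: "Tr (\<lambda>u. c *\<^sub>R L u) = c * Tr L"
  by (simp add: Tr_def sum_distrib_left)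
lemma Tr_neg: "Tr (\<lambda>u. - L u) = - Tr L"
  by (simp add: Tr_def sum_negf)
lemma Tr_id: "Tr (\<lambda>u::real^'k. u) = real CARD('k)"
  by (simp add: Tr_def axis_def)
lemma Tr_sum: "Tr (\<lambda>u. \<Sum>j\<in>S. L j u) = (\<Sum>j\<in>S. Tr (L j))"
  unfolding Tr_def by (simp add: sum_component) (rule sum.swap)
lemma Tr_cong: "(\<And>u. L u = M u) \<Longrightarrow> Tr L = Tr M"
  by (simp add: Tr_def)

locale dualb =
  fixes ip :: "real^'k \<Rightarrow> real^'k \<Rightarrow> real" and f :: "'k \<Rightarrow> real^'k"
  assumes pd: "pos_def_ip ip"
    and dual: "\<And>i j. ip (axis i 1) (f j) = (if i = j then 1 else 0)"
begin

lemma bil: "bilinear ip" using pd by (simp add: pos_def_ip_def)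
lemma sym: "ip x y = ip y x" using pd by (simp add: pos_def_ip_def)

lemma lsum: "ip (sum g S) w = (\<Sum>k\<in>S. ip (g k) w)"
  using linear_sum[of "\<lambda>x. ip x w"] bil unfolding bilinear_def by blast
lemma rsum: "ip w (sum g S) = (\<Sum>k\<in>S. ip w (g k))"
  using linear_sum[of "\<lambda>x. ip w x"] bil unfolding bilinear_def by blast

lemma coord: "ip x (f j) = x $ j"
  by (simp only: ip_coord[OF pd, of x "f j"]) (simp add: dual if_distrib cong: if_cong)

lemma coord2: "ip x w = (\<Sum>i\<in>UNIV. w$i * ip x (axis i 1))"
proof -
  have "ip x w = ip w x" by (rule sym)
  also have "\<dots> = (\<Sum>i\<in>UNIV. w$i * ip (axis i 1) x)" by (rule ip_coord[OF pd])
  also have "\<dots> = (\<Sum>i\<in>UNIV. w$i * ip x (axis i 1))" by (simp add: sym[of "axis _ 1" x])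
  finally show ?thesis .
qed

lemma fsym: "f i $ k = f k $ i" by (metis coord sym)

lemma Tr_ip: "Tr L = (\<Sum>i\<in>UNIV. ip (L (axis i 1)) (f i))"
  by (simp add: Tr_def coord)

lemma expand: "x = (\<Sum>k\<in>UNIV. ip x (f k) *\<^sub>R axis k 1)"
  using basis_expansion[of x] by (simp add: scalar_mult_eq_scaleR coord)

lemma expand2: "x = (\<Sum>k\<in>UNIV. ip x (axis k 1) *\<^sub>R f k)"
proof (rule pd_nondeg[OF pd])
  fix w
  have "ip (\<Sum>k\<in>UNIV. ip x (axis k 1) *\<^sub>R f k) w
      = (\<Sum>i\<in>UNIV. w$i * (\<Sum>k\<in>UNIV. ip x (axis k 1) * ip (f k) (axis i 1)))"
    by (simp add: coord2[of _ w] lsum bilinear_lmul[OF bil])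
  also have "\<dots> = (\<Sum>i\<in>UNIV. w$i * ip x (axis i 1))"
    by (simp add: sym[of "f _"] dual if_distrib cong: if_cong)
  also have "\<dots> = ip x w" by (simp add: coord2[of x w])
  finally show "ip x w = ip (\<Sum>k\<in>UNIV. ip x (axis k 1) *\<^sub>R f k) w" by simp
qed

lemma Tr_swap:
  assumes "linear L"
  shows "(\<Sum>i\<in>UNIV. ip (L (f i)) (axis i 1)) = Tr L"
proof -
  have "\<And>i. L (f i) = (\<Sum>k\<in>UNIV. ip (f i) (f k) *\<^sub>R L (axis k 1))"
  proof -
    fix i
    have "L (f i) = L (\<Sum>k\<in>UNIV. ip (f i) (f k) *\<^sub>R axis k 1)" using expand[of "f i"] by simp
    also have "\<dots> = (\<Sum>k\<in>UNIV. ip (f i) (f k) *\<^sub>R L (axis k 1))"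
      using assms by (simp add: linear_sum linear_scale)
    finally show "L (f i) = (\<Sum>k\<in>UNIV. ip (f i) (f k) *\<^sub>R L (axis k 1))" .
  qed
  hence "(\<Sum>i\<in>UNIV. ip (L (f i)) (axis i 1))
      = (\<Sum>i\<in>UNIV. \<Sum>k\<in>UNIV. f i $ k * ip (L (axis k 1)) (axis i 1))"
    by (simp add: lsum bilinear_lmul[OF bil] coord)
  also have "\<dots> = (\<Sum>k\<in>UNIV. \<Sum>i\<in>UNIV. f k $ i * ip (L (axis k 1)) (axis i 1))"
    by (subst sum.swap) (simp add: fsym)
  also have "\<dots> = Tr L" by (simp add: Tr_ip coord2[of _ "f _"])
  finally show ?thesis .
qed
end

lemma linear_comp2:
  assumes "linear f" "linear g" shows "linear (\<lambda>u. g (f u))"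
proof -
  have "linear (g \<circ> f)" by (rule linear_compose[OF assms])
  thus ?thesis by (simp only: comp_def)
qed

locale htype = V: dualb ipv fv + Z: dualb ipz fz
  for ipv :: "real^'n \<Rightarrow> real^'n \<Rightarrow> real" and fv
  and ipz :: "real^'m \<Rightarrow> real^'m \<Rightarrow> real" and fz +
  fixes br :: "real^'n \<Rightarrow> real^'n \<Rightarrow> real^'m" and T :: "real^'m \<Rightarrow> real^'n \<Rightarrow> real^'n"
  assumes brbil: "bilinear br" and brskew: "\<And>u w. br u w = - br w u"
    and Tlin: "\<And>z. linear (T z)"
    and Tip: "\<And>z u w. ipv (T z u) w = ipz z (br u w)"
    and Tsq: "\<And>z u. T z (T z u) = - (ipz z z) *\<^sub>R u"
begin

lemma Tskew: "ipv (T z u) w = - ipv u (T z w)"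
proof -
  have "ipv (T z u) w = ipz z (br u w)" by (rule Tip)
  also have "\<dots> = ipz z (- br w u)" by (simp add: brskew[of u w])
  also have "\<dots> = - ipz z (br w u)" by (simp add: bilinear_rneg[OF Z.bil])
  also have "\<dots> = - ipv u (T z w)" by (simp add: Tip[symmetric] V.sym)
  finally show ?thesis .
qed

lemma TT: "ipv (T z p) (T z q) = ipz z z * ipv p q"
  using Tskew[of z "T z p" q] by (simp add: Tsq bilinear_lmul[OF V.bil] bilinear_lneg[OF V.bil])

lemma Tadd: "T (x + y) u = T x u + T y u"
  by (rule pd_nondeg[OF V.pd]) (simp add: Tip bilinear_ladd[OF V.bil] bilinear_ladd[OF Z.bil])

lemma Tscale: "T (c *\<^sub>R x) u = c *\<^sub>R T x u"
  by (rule pd_nondeg[OF V.pd]) (simp add: Tip bilinear_lmul[OF V.bil] bilinear_lmul[OF Z.bil])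

lemma anti: "T x (T y u) + T y (T x u) = - (2 * ipz x y) *\<^sub>R u"
proof -
  have h: "ipz (x+y) (x+y) = ipz x x + 2 * ipz x y + ipz y y"
    by (simp add: bilinear_ladd[OF Z.bil] bilinear_radd[OF Z.bil] Z.sym[of y x])
  have "T (x+y) (T (x+y) u) = T x (T x u) + T y (T y u) + (T x (T y u) + T y (T x u))"
    by (simp add: Tadd linear_add[OF Tlin] algebra_simps)
  hence "- (ipz x x + 2 * ipz x y + ipz y y) *\<^sub>R u
      = - ipz x x *\<^sub>R u + - ipz y y *\<^sub>R u + (T x (T y u) + T y (T x u))"
    by (simp only: Tsq h)
  thus ?thesis by (simp add: algebra_simps)
qed

lemma TrTT: "Tr (\<lambda>u. T x (T y u)) = - ipz x y * real CARD('n)"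
proof -
  have "Tr (\<lambda>u. T x (T y u)) + Tr (\<lambda>u. T y (T x u)) = Tr (\<lambda>u::real^'n. - (2 * ipz x y) *\<^sub>R u)"
    by (simp add: Tr_add[symmetric] anti)
  also have "\<dots> = - (2 * ipz x y) * real CARD('n)"
    using Tr_neg[of "\<lambda>u::real^'n. (2 * ipz x y) *\<^sub>R u"] Tr_scale[of _ "\<lambda>u::real^'n. u"] Tr_id[where 'k='n] by simp
  finally show ?thesis using Tr_comm[OF Tlin Tlin, of x y] by (simp add: algebra_simps)
qed

lemma Ssum: "(\<Sum>i\<in>UNIV. br (axis i 1) (T z (fv i))) = real CARD('n) *\<^sub>R z"
proof (rule pd_nondeg2[OF Z.pd])
  fix y
  have "ipz y (\<Sum>i\<in>UNIV. br (axis i 1) (T z (fv i))) = (\<Sum>i\<in>UNIV. ipv (T y (axis i 1)) (T z (fv i)))"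
    by (simp add: Z.rsum Tip)
  also have "\<dots> = (\<Sum>i\<in>UNIV. - ipv (T z (T y (axis i 1))) (fv i))"
    by (rule sum.cong, simp, metis Tskew V.sym)
  also have "\<dots> = - Tr (\<lambda>u. T z (T y u))" by (simp add: V.Tr_ip sum_negf)
  also have "\<dots> = ipz y (real CARD('n) *\<^sub>R z)" by (simp add: TrTT bilinear_rmul[OF Z.bil] Z.sym)
  finally show "ipz y (\<Sum>i\<in>UNIV. br (axis i 1) (T z (fv i))) = ipz y (real CARD('n) *\<^sub>R z)" .
qed

lemma dir1:
  assumes tr: "trace a = 0" and lb: "linear b"
    and der: "\<And>u w. b (br u w) = br (a *v u) w + br u (a *v w)"
  shows "ipz (b x) y = - ipz x (b y)"
proof -
  define A where "A u = a *v u" for u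
  have lA: "linear A" unfolding A_def by simp
  have trA: "Tr A = 0" using tr Tr_mat[of a] by (simp add: A_def[abs_def])
  have zero: "ipz z (b z) = 0" for z
  proof -
    have "real CARD('n) * ipz z (b z) = ipz z (b (real CARD('n) *\<^sub>R z))"
      by (simp add: linear_scale[OF lb] bilinear_rmul[OF Z.bil])
    also have "\<dots> = (\<Sum>i\<in>UNIV. ipz z (b (br (axis i 1) (T z (fv i)))))"
      by (simp add: Ssum[symmetric] linear_sum[OF lb] Z.rsum)
    also have "\<dots> = (\<Sum>i\<in>UNIV. ipv (T z (A (axis i 1))) (T z (fv i)))
                  + (\<Sum>i\<in>UNIV. ipv (T z (axis i 1)) (A (T z (fv i))))"
      by (simp add: der bilinear_radd[OF Z.bil] Tip sum.distrib A_def)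
    finally have s1: "real CARD('n) * ipz z (b z) = (\<Sum>i\<in>UNIV. ipv (T z (A (axis i 1))) (T z (fv i)))
                  + (\<Sum>i\<in>UNIV. ipv (T z (axis i 1)) (A (T z (fv i))))" .
    have s2: "(\<Sum>i\<in>UNIV. ipv (T z (A (axis i 1))) (T z (fv i))) = ipz z z * Tr A"
      by (simp add: TT V.Tr_ip sum_distrib_left)
    have each: "ipv (T z (axis i 1)) (A (T z (fv i))) = - ipv (T z (A (T z (fv i)))) (axis i 1)" for i
      using Tskew[of z "axis i 1" "A (T z (fv i))"] V.sym[of "axis i 1" "T z (A (T z (fv i)))"] by simp
    have "(\<Sum>i\<in>UNIV. ipv (T z (axis i 1)) (A (T z (fv i))))
        = - (\<Sum>i\<in>UNIV. ipv (T z (A (T z (fv i)))) (axis i 1))"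
      by (simp only: each sum_negf)
    also have "(\<Sum>i\<in>UNIV. ipv (T z (A (T z (fv i)))) (axis i 1)) = Tr (\<lambda>u. T z (A (T z u)))"
      by (rule V.Tr_swap, rule linear_comp2[OF linear_comp2[OF Tlin lA] Tlin])
    finally have s3: "(\<Sum>i\<in>UNIV. ipv (T z (axis i 1)) (A (T z (fv i)))) = - Tr (\<lambda>u. T z (A (T z u)))" .
    have "Tr (\<lambda>u. T z (A (T z u))) = Tr (\<lambda>u. A (T z (T z u)))"
      using Tr_comm[OF Tlin linear_comp2[OF Tlin lA], of z z] by simp
    also have "\<dots> = Tr (\<lambda>u. - (ipz z z *\<^sub>R A u))"
      by (rule Tr_cong) (simp add: Tsq linear_scale[OF lA] linear_neg[OF lA])
    also have "\<dots> = - ipz z z * Tr A"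
      using Tr_neg[of "\<lambda>u. ipz z z *\<^sub>R A u"] Tr_scale[of "ipz z z" A] by simp
    finally have s4: "Tr (\<lambda>u. T z (A (T z u))) = - ipz z z * Tr A" .
    have "real CARD('n) * ipz z (b z) = 0" using s1 s2 s3 s4 trA by simp
    thus ?thesis by simp
  qed
  have "ipz (x+y) (b (x+y)) = 0" by (rule zero)
  hence "ipz x (b y) + ipz y (b x) = 0"
    using zero[of x] zero[of y]
    by (simp add: linear_add[OF lb] bilinear_ladd[OF Z.bil] bilinear_radd[OF Z.bil])
  thus ?thesis by (simp add: Z.sym[of y] eq_neg_iff_add_eq_0 add.commute)
qed


definition Ax :: "real^'m \<Rightarrow> real^'m \<Rightarrow> real^'n \<Rightarrow> real^'n" where
  "Ax x y u = (1/4) *\<^sub>R (T x (T y u) - T y (T x u))"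

lemma swap3: "T z (T x (T y u)) = T x (T y (T z u)) + (2 * ipz z y) *\<^sub>R T x u - (2 * ipz z x) *\<^sub>R T y u"
proof -
  have e1: "T z (T x v) = - T x (T z v) - (2 * ipz z x) *\<^sub>R v" for v x
  proof -
    have "T z (T x v) = (T z (T x v) + T x (T z v)) - T x (T z v)" by simp
    also have "\<dots> = - (2 * ipz z x) *\<^sub>R v - T x (T z v)" by (simp only: anti)
    finally show ?thesis by simp
  qed
  have e2: "T z (T y u) = - T y (T z u) - (2 * ipz z y) *\<^sub>R u" by (rule e1)
  have "T z (T x (T y u)) = - T x (T z (T y u)) - (2 * ipz z x) *\<^sub>R T y u" by (rule e1)
  also have "T x (T z (T y u)) = - T x (T y (T z u)) - (2 * ipz z y) *\<^sub>R T x u"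
    by (simp only: e2 linear_diff[OF Tlin] linear_neg[OF Tlin] linear_scale[OF Tlin])
  finally show ?thesis by simp
qed

lemma Ax_lin: "linear (Ax x y)"
  by (rule linearI) (simp_all add: Ax_def linear_add[OF Tlin] linear_scale[OF Tlin] algebra_simps)

lemma lift: "ipz x (br u w) *\<^sub>R y - ipz y (br u w) *\<^sub>R x = br (Ax x y u) w + br u (Ax x y w)"
proof (rule pd_nondeg2[OF Z.pd])
  fix z
  have K: "T z (Ax x y u) - Ax x y (T z u) = ipz z y *\<^sub>R T x u - ipz z x *\<^sub>R T y u"
  proof -
    have "T z (Ax x y u) - Ax x y (T z u) = (1/4) *\<^sub>R (T z (T x (T y u)) - T z (T y (T x u)))
        - (1/4) *\<^sub>R (T x (T y (T z u)) - T y (T x (T z u)))"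
      by (simp only: Ax_def linear_diff[OF Tlin] linear_scale[OF Tlin])
    also have "\<dots> = (1/4) *\<^sub>R ((T x (T y (T z u)) + (2 * ipz z y) *\<^sub>R T x u - (2 * ipz z x) *\<^sub>R T y u)
          - (T y (T x (T z u)) + (2 * ipz z x) *\<^sub>R T y u - (2 * ipz z y) *\<^sub>R T x u))
        - (1/4) *\<^sub>R (T x (T y (T z u)) - T y (T x (T z u)))"
      by (simp only: swap3[of z x y] swap3[of z y x])
    also have "\<dots> = ipz z y *\<^sub>R T x u - ipz z x *\<^sub>R T y u"
      by (simp add: vec_eq_iff field_simps)
    finally show ?thesis .
  qed
  have sk2: "ipv p (T c (T d q)) = ipv (T d (T c p)) q" for p q c d
    using Tskew[of c p "T d q"] Tskew[of d "T c p" q] by simp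
  have r: "ipv (T z u) (Ax x y w) = - ipv (Ax x y (T z u)) w"
    by (simp add: Ax_def bilinear_rmul[OF V.bil] bilinear_rsub[OF V.bil] bilinear_lmul[OF V.bil]
        bilinear_lsub[OF V.bil] sk2 field_simps)
  have "ipz z (br (Ax x y u) w + br u (Ax x y w)) = ipv (T z (Ax x y u) - Ax x y (T z u)) w"
    by (simp add: bilinear_radd[OF Z.bil] Tip[symmetric] r bilinear_lsub[OF V.bil])
  also have "\<dots> = ipz z (ipz x (br u w) *\<^sub>R y - ipz y (br u w) *\<^sub>R x)"
    by (simp add: K bilinear_lsub[OF V.bil] bilinear_lmul[OF V.bil] Tip bilinear_rsub[OF Z.bil]
        bilinear_rmul[OF Z.bil] Z.sym[of z])
  finally show "ipz z (ipz x (br u w) *\<^sub>R y - ipz y (br u w) *\<^sub>R x) = ipz z (br (Ax x y u) w + br u (Ax x y w))"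
    by simp
qed

lemma TrAx: "Tr (Ax x y) = 0"
  unfolding Ax_def
  by (simp add: Tr_scale Tr_diff Tr_comm[OF Tlin Tlin, of x y])


lemma brlsum: "br (sum g S) w = (\<Sum>k\<in>S. br (g k) w)"
  using linear_sum[of "\<lambda>x. br x w"] brbil unfolding bilinear_def by blast
lemma brrsum: "br w (sum g S) = (\<Sum>k\<in>S. br w (g k))"
  using linear_sum[of "\<lambda>x. br w x"] brbil unfolding bilinear_def by blast

lemma decomp:
  assumes lb: "linear b" and sk: "\<And>x y. ipz (b x) y = - ipz x (b y)"
  shows "b v = (\<Sum>j\<in>UNIV. (1/2) *\<^sub>R (ipz (fz j) v *\<^sub>R b (axis j 1) - ipz (b (axis j 1)) v *\<^sub>R fz j))"
proof -
  have "b v = b (\<Sum>k\<in>UNIV. ipz v (fz k) *\<^sub>R axis k 1)"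
    by (rule arg_cong[of _ _ b]) (rule Z.expand)
  also have "\<dots> = (\<Sum>j\<in>UNIV. ipz (fz j) v *\<^sub>R b (axis j 1))"
    by (simp add: linear_sum[OF lb] linear_scale[OF lb] Z.sym[of "fz _"])
  finally have 1: "(\<Sum>j\<in>UNIV. ipz (fz j) v *\<^sub>R b (axis j 1)) = b v" by simp
  have "(\<Sum>j\<in>UNIV. ipz (b (axis j 1)) v *\<^sub>R fz j) = (\<Sum>j\<in>UNIV. - (ipz (b v) (axis j 1) *\<^sub>R fz j))"
    by (rule sum.cong) (simp_all add: sk Z.sym[of "axis _ 1"])
  also have "\<dots> = - (\<Sum>j\<in>UNIV. ipz (b v) (axis j 1) *\<^sub>R fz j)" by (simp add: sum_negf)
  also have "\<dots> = - b v" using Z.expand2[of "b v", symmetric] by simp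
  finally have 2: "(\<Sum>j\<in>UNIV. ipz (b (axis j 1)) v *\<^sub>R fz j) = - b v" .
  show ?thesis
    by (simp add: scaleR_sum_right[symmetric] sum_subtractf 1 2)
qed

lemma dir2:
  assumes lb: "linear b" and sk: "\<And>x y. ipz (b x) y = - ipz x (b y)"
  shows "b \<in> g_image br"
proof -
  define a where "a u = (\<Sum>j\<in>UNIV. (1/2) *\<^sub>R Ax (fz j) (b (axis j 1)) u)" for u
  have la: "linear a"
    by (rule linearI) (simp_all add: a_def linear_add[OF Ax_lin] linear_scale[OF Ax_lin]
        sum.distrib scaleR_sum_right algebra_simps)
  have mw: "matrix a *v u = a u" for u
    using matrix_works[of a] la by (simp add: linear_def scalar_mult_eq_scaleR)
  have tr: "trace (matrix a) = 0"
    by (simp add: Tr_matrix a_def[abs_def] Tr_sum Tr_scale TrAx)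
  have der: "b (br u w) = br (matrix a *v u) w + br u (matrix a *v w)" for u w
  proof -
    have "b (br u w) = (\<Sum>j\<in>UNIV. (1/2) *\<^sub>R (br (Ax (fz j) (b (axis j 1)) u) w
                 + br u (Ax (fz j) (b (axis j 1)) w)))"
      by (subst decomp[OF lb sk]) (simp add: lift)
    also have "\<dots> = br (a u) w + br u (a w)"
      by (simp add: a_def brlsum brrsum bilinear_lmul[OF brbil] bilinear_rmul[OF brbil]
          sum.distrib scaleR_add_right)
    finally show ?thesis by (simp add: mw)
  qed
  have "(matrix a, b) \<in> g_alg br" using tr lb der by (simp add: g_alg_def)
  thus ?thesis unfolding g_image_def by (rule image_eqI[rotated]) simp
qed

end

theorem proposition2p2:
  fixes br :: "real^'n \<Rightarrow> real^'n \<Rightarrow> real^'m"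
  assumes "two_step_with_center br"
    and "H_type br"
  shows "\<exists>ip :: real^'m \<Rightarrow> real^'m \<Rightarrow> real. pos_def_ip ip \<and> g_image br = so_ip ip"
proof -
  from assms(2) obtain ipv ipz where H: "pos_def_ip ipv \<and> pos_def_ip ipz \<and>
     (\<forall>z. \<exists>T. linear T \<and> (\<forall>u w. ipv (T u) w = ipz z (br u w))
            \<and> (\<forall>u. T (T u) = - (ipz z z) *\<^sub>R u))"
    unfolding H_type_def by (elim exE) (rule that, assumption)
  have pv: "pos_def_ip ipv" using H by (rule conjunct1)
  have pz: "pos_def_ip ipz" using H by (elim conjE)
  have ex: "\<forall>z. \<exists>T. linear T \<and> (\<forall>u w. ipv (T u) w = ipz z (br u w))
            \<and> (\<forall>u. T (T u) = - (ipz z z) *\<^sub>R u)" using H by (elim conjE)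
  from choice[OF ex] obtain T where T: "\<forall>z. linear (T z) \<and> (\<forall>u w. ipv (T z u) w = ipz z (br u w))
            \<and> (\<forall>u. T z (T z u) = - (ipz z z) *\<^sub>R u)" by (elim exE) (rule that, assumption)
  have T1a: "linear (T z)" for z using spec[OF T, of z] by blast
  have T1b: "ipv (T z u) w = ipz z (br u w)" for z u w using spec[OF T, of z] by blast
  have T1c: "T z (T z u) = - (ipz z z) *\<^sub>R u" for z u using spec[OF T, of z] by blast
  have br1a: "bilinear br" using assms(1) unfolding two_step_with_center_def by blast
  have br1b: "br u w = - br w u" for u w using assms(1) unfolding two_step_with_center_def by blast
  from dual_basis[OF pv] obtain fv where fv: "\<forall>i j. ipv (axis i 1) (fv j) = (if i = j then 1 else 0)"
    by (elim exE) (rule that, assumption)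
  from dual_basis[OF pz] obtain fz where fz: "\<forall>i j. ipz (axis i 1) (fz j) = (if i = j then 1 else 0)"
    by (elim exE) (rule that, assumption)
  interpret H: htype ipv fv ipz fz br T
    unfolding htype_def htype_axioms_def dualb_def
    using pv pz fv fz br1a br1b T1a T1b T1c by blast
  have "g_image br = so_ip ipz"
  proof (rule equalityI)
    show "g_image br \<subseteq> so_ip ipz"
    proof (rule subsetI)
      fix b assume "b \<in> g_image br"
      then obtain p where p: "p \<in> g_alg br" and bp: "b = snd p" unfolding g_image_def by (rule imageE)
      have pp: "trace (fst p) = 0 \<and> linear (snd p) \<and>
          (\<forall>u w. snd p (br u w) = br (fst p *v u) w + br u (fst p *v w))"
        using p unfolding g_alg_def by (rule CollectD)
      have tr: "trace (fst p) = 0" using pp by (rule conjunct1)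
      have lb: "linear b" using pp bp by simp
      have der: "b (br u w) = br (fst p *v u) w + br u (fst p *v w)" for u w
        using pp bp by simp
      show "b \<in> so_ip ipz"
        unfolding so_ip_def
      proof (rule CollectI, rule conjI)
        show "linear b" by (rule lb)
        show "\<forall>x y. ipz (b x) y = - ipz x (b y)"
          by (intro allI) (rule H.dir1[OF tr lb der])
      qed
    qed
    show "so_ip ipz \<subseteq> g_image br"
    proof (rule subsetI)
      fix b assume "b \<in> so_ip ipz"
      hence bb: "linear b \<and> (\<forall>x y. ipz (b x) y = - ipz x (b y))" unfolding so_ip_def by (rule CollectD)
      have lb: "linear b" using bb by (rule conjunct1)
      have sk: "ipz (b x) y = - ipz x (b y)" for x y using bb by (elim conjE allE)
      show "b \<in> g_image br" by (rule H.dir2[OF lb sk])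
    qed
  qed
  thus ?thesis using pz by (intro exI conjI)
qed
end
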